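(* In the setting described in the context, let $i\in V$, $j\in N_C(i)$, $W=W_{ij}$ and $Q=W-H\bar H W$. Then for every $\tilde x\in\mathbb{R}^m$, with $Z=H\bar H\tilde x$, we have $QZ=\mathbf{0}_m$.
   Context: Let $V=\{1,\ldots,N\}$, $N\ge 2$, and let $G_I=(V,E_I)$ be a connected undirected graph which is not complete, with adjacency matrix $A$; let $B=A+I_N$. For $i\in V$ let $N_I(i)$ be the set of neighbors of $i$ in $G_I$, $\tilde N_I(i)=N_I(i)\cup\{i\}$, $m_i=\deg_{G_I}(i)+1$, $m=\sum_{i=1}^N m_i$, $\mathbf m=(m_1,\ldots,m_N)^T$. For $i,j\in V$ set $s_{ij}=\sum_{l=1}^{j}B(i,l)+\sum_{r=1}^{i-1}m_r$ (the last sum is $0$ for $i=1$). Let $e_1,\ldots,e_m$ be the standard basis of $\mathbb{R}^m$ and define $E_j^i=e_{s_{ij}}$ if $j\in\tilde N_I(i)$ and $E_j^i=\mathbf{0}_m$ otherwise. Let $H=\big[\sum_{i=1}^N E_1^i,\ldots,\sum_{i=1}^N E_N^i\big]\in\mathbb{R}^{m\times N}$ and $\bar H=\mathrm{diag}(1/m_1,\ldots,1/m_N)H^T\in\mathbb{R}^{N\times m}$. Let $G_C=(V,E_C)$ be a communication graph with $G_m\subseteq G_C\subseteq G_I$, where $G_m$ is a maximal triangle-free spanning subgraph of $G_I$ (a triangle-free spanning subgraph such that adding any edge of $G_I$ not in it creates a triangle); $N_C(i)$ denotes the neighbors of $i$ in $G_C$. For $i,j\in V$ let $\mathrm{ind}(i,j)=\tilde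 N_I(i)\cap\tilde N_I(j)$ and $W_{ij}=I_m-\tfrac12\sum_{l\in \mathrm{ind}(i,j)}(E_l^{i}-E_l^{j})(E_l^{i}-E_l^{j})^T$. *)

theory Defs
  imports "Jordan_Normal_Form.Matrix"
begin

text \<open>Graphs on vertex set V = {1..N} are given by edge relations
  E :: nat \<Rightarrow> nat \<Rightarrow> bool (only pairs in V are relevant).
  Matrix/vector indices are 0-based (JNF), so the paper's basis vector e_k is unit_vec m (k-1)
  and the paper's column j of H is column j-1.\<close>

definition simple_graph :: "nat \<Rightarrow> (nat \<Rightarrow> nat \<Rightarrow> bool) \<Rightarrow> bool" where
  "simple_graph N E \<longleftrightarrow> (\<forall>i j. E i j \<longrightarrow> i \<in> {1..N} \<and> j \<in> {1..N} \<and> i \<noteq> j \<and> E j i)"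

definition connected_graph :: "nat \<Rightarrow> (nat \<Rightarrow> nat \<Rightarrow> bool) \<Rightarrow> bool" where
  "connected_graph N E \<longleftrightarrow> (\<forall>i\<in>{1..N}. \<forall>j\<in>{1..N}. E\<^sup>*\<^sup>* i j)"

definition complete_graph :: "nat \<Rightarrow> (nat \<Rightarrow> nat \<Rightarrow> bool) \<Rightarrow> bool" where
  "complete_graph N E \<longleftrightarrow> (\<forall>i\<in>{1..N}. \<forall>j\<in>{1..N}. i \<noteq> j \<longrightarrow> E i j)"

definition subgraph :: "(nat \<Rightarrow> nat \<Rightarrow> bool) \<Rightarrow> (nat \<Rightarrow> nat \<Rightarrow> bool) \<Rightarrow> bool" where
  "subgraph E1 E2 \<longleftrightarrow> (\<forall>i j. E1 i j \<longrightarrow> E2 i j)"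

definition triangle_free :: "(nat \<Rightarrow> nat \<Rightarrow> bool) \<Rightarrow> bool" where
  "triangle_free E \<longleftrightarrow> \<not> (\<exists>a b c. E a b \<and> E b c \<and> E a c)"

definition maximal_triangle_free_spanning_subgraph ::
  "nat \<Rightarrow> (nat \<Rightarrow> nat \<Rightarrow> bool) \<Rightarrow> (nat \<Rightarrow> nat \<Rightarrow> bool) \<Rightarrow> bool" where
  "maximal_triangle_free_spanning_subgraph N Em EI \<longleftrightarrow>
     simple_graph N Em \<and> subgraph Em EI \<and> triangle_free Em \<and>
     (\<forall>a b. EI a b \<and> \<not> Em a b \<longrightarrow>
        \<not> triangle_free (\<lambda>x y. Em x y \<or> (x = a \<and> y = b) \<or> (x = b \<and> y = a)))"

definition Bmat :: "(nat \<Rightarrow> nat \<Rightarrow> bool) \<Rightarrow> nat \<Rightarrow> nat \<Rightarrow> nat" where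
  "Bmat E i l = (if E i l then 1 else 0) + (if i = l then 1 else 0)"

definition nbrs :: "nat \<Rightarrow> (nat \<Rightarrow> nat \<Rightarrow> bool) \<Rightarrow> nat \<Rightarrow> nat set" where
  "nbrs N E i = {j \<in> {1..N}. E i j}"

definition cnbrs :: "nat \<Rightarrow> (nat \<Rightarrow> nat \<Rightarrow> bool) \<Rightarrow> nat \<Rightarrow> nat set" where
  "cnbrs N E i = insert i (nbrs N E i)"

definition mdeg :: "nat \<Rightarrow> (nat \<Rightarrow> nat \<Rightarrow> bool) \<Rightarrow> nat \<Rightarrow> nat" where
  "mdeg N E i = card (nbrs N E i) + 1"

definition mtot :: "nat \<Rightarrow> (nat \<Rightarrow> nat \<Rightarrow> bool) \<Rightarrow> nat" where
  "mtot N E = (\<Sum>i=1..N. mdeg N E i)"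

definition sidx :: "nat \<Rightarrow> (nat \<Rightarrow> nat \<Rightarrow> bool) \<Rightarrow> nat \<Rightarrow> nat \<Rightarrow> nat" where
  "sidx N E i j = (\<Sum>l=1..j. Bmat E i l) + (\<Sum>r=1..i-1. mdeg N E r)"

definition Evec :: "nat \<Rightarrow> (nat \<Rightarrow> nat \<Rightarrow> bool) \<Rightarrow> nat \<Rightarrow> nat \<Rightarrow> real vec" where
  "Evec N E i j = (if j \<in> cnbrs N E i then unit_vec (mtot N E) (sidx N E i j - 1)
                   else 0\<^sub>v (mtot N E))"

definition Hmat :: "nat \<Rightarrow> (nat \<Rightarrow> nat \<Rightarrow> bool) \<Rightarrow> real mat" where
  "Hmat N E = mat (mtot N E) N (\<lambda>(r, c). \<Sum>i=1..N. Evec N E i (c + 1) $ r)"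

definition Hbar :: "nat \<Rightarrow> (nat \<Rightarrow> nat \<Rightarrow> bool) \<Rightarrow> real mat" where
  "Hbar N E = mat_diag N (\<lambda>k. 1 / real (mdeg N E (k + 1))) * transpose_mat (Hmat N E)"

definition ind :: "nat \<Rightarrow> (nat \<Rightarrow> nat \<Rightarrow> bool) \<Rightarrow> nat \<Rightarrow> nat \<Rightarrow> nat set" where
  "ind N E i j = cnbrs N E i \<inter> cnbrs N E j"

definition outer :: "real vec \<Rightarrow> real mat" where
  "outer v = mat (dim_vec v) (dim_vec v) (\<lambda>(r, c). v $ r * v $ c)"

definition Wmat :: "nat \<Rightarrow> (nat \<Rightarrow> nat \<Rightarrow> bool) \<Rightarrow> nat \<Rightarrow> nat \<Rightarrow> real mat" where
  "Wmat N E i j = 1\<^sub>m (mtot N E) -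
     (1/2) \<cdot>\<^sub>m mat (mtot N E) (mtot N E)
        (\<lambda>(r, c). \<Sum>l\<in>ind N E i j. outer (Evec N E i l - Evec N E j l) $$ (r, c))"

end

theory Submission
  imports Defs
begin

lemma cn_iff:
  assumes sg: "simple_graph N E" and l: "l \<in> {1..N}" and i: "i \<in> {1..N}"
  shows "l \<in> cnbrs N E i \<longleftrightarrow> E i l \<or> l = i"
  using l i unfolding cnbrs_def nbrs_def by auto

lemma cn_sub: "i \<in> {1..N} \<Longrightarrow> cnbrs N E i \<subseteq> {1..N}"
  unfolding cnbrs_def nbrs_def by auto

lemma card_cn:
  assumes sg: "simple_graph N E"
  shows "card (cnbrs N E i) = mdeg N E i"
proof -
  have "i \<notin> nbrs N E i" using sg unfolding nbrs_def simple_graph_def by auto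
  moreover have "finite (nbrs N E i)" unfolding nbrs_def by auto
  ultimately show ?thesis unfolding cnbrs_def mdeg_def by simp
qed

lemma cnt_eq:
  assumes sg: "simple_graph N E" and i: "i \<in> {1..N}" and k: "k \<le> N"
  shows "(\<Sum>l=1..k. Bmat E i l) = card {l\<in>{1..k}. l \<in> cnbrs N E i}"
proof -
  have "(\<Sum>l=1..k. Bmat E i l) = (\<Sum>l=1..k. if l \<in> cnbrs N E i then 1 else 0)"
  proof (rule sum.cong)
    fix l assume l: "l \<in> {1..k}"
    hence l': "l \<in> {1..N}" using k by auto
    have "E i l \<Longrightarrow> i \<noteq> l" using sg unfolding simple_graph_def by auto
    thus "Bmat E i l = (if l \<in> cnbrs N E i then 1 else 0)"
      using cn_iff[OF sg l' i] unfolding Bmat_def by auto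
  qed simp
  also have "\<dots> = card {l\<in>{1..k}. l \<in> cnbrs N E i}"
  proof -
    have "{1..k} \<inter> cnbrs N E i = {l\<in>{1..k}. l \<in> cnbrs N E i}" by auto
    thus ?thesis by (simp add: sum.If_cases)
  qed
  finally show ?thesis .
qed

definition off :: "nat \<Rightarrow> (nat \<Rightarrow> nat \<Rightarrow> bool) \<Rightarrow> nat \<Rightarrow> nat" where
  "off N E i = (\<Sum>r=1..i-1. mdeg N E r)"

lemma off_step: "i \<ge> 1 \<Longrightarrow> off N E i + mdeg N E i = (\<Sum>r=1..i. mdeg N E r)"
proof -
  assume "i \<ge> 1"
  then obtain n where n: "i = Suc n" by (cases i) auto
  show ?thesis unfolding off_def n by simp
qed

lemma sum_mono_upto: "a \<le> b \<Longrightarrow> (\<Sum>r=1..a. mdeg N E r) \<le> (\<Sum>r=1..b. mdeg N E r)"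
  by (rule sum_mono2) auto

lemma cnt_bounds:
  assumes sg: "simple_graph N E" and i: "i \<in> {1..N}" and k: "k \<in> cnbrs N E i"
  shows "1 \<le> card {l\<in>{1..k}. l \<in> cnbrs N E i} \<and> card {l\<in>{1..k}. l \<in> cnbrs N E i} \<le> mdeg N E i"
proof -
  have kN: "k \<in> {1..N}" using cn_sub[OF i, of E] k by auto
  have "k \<in> {l\<in>{1..k}. l \<in> cnbrs N E i}" using k kN by auto
  hence "{l\<in>{1..k}. l \<in> cnbrs N E i} \<noteq> {}" by blast
  moreover have "finite {l\<in>{1..k}. l \<in> cnbrs N E i}" by simp
  ultimately have "card {l\<in>{1..k}. l \<in> cnbrs N E i} \<noteq> 0" by simp
  hence "card {l\<in>{1..k}. l \<in> cnbrs N E i} \<ge> 1" by linarith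
  moreover have "card {l\<in>{1..k}. l \<in> cnbrs N E i} \<le> card (cnbrs N E i)"
  proof (rule card_mono)
    show "finite (cnbrs N E i)" using cn_sub[OF i, of E] finite_subset by blast
  qed blast
  ultimately show ?thesis using card_cn[OF sg] by simp
qed

lemma cnt_mono:
  assumes sg: "simple_graph N E" and i: "i \<in> {1..N}" and k: "k \<in> cnbrs N E i"
    and k': "k' \<in> cnbrs N E i" and lt: "k < k'"
  shows "card {l\<in>{1..k}. l \<in> cnbrs N E i} < card {l\<in>{1..k'}. l \<in> cnbrs N E i}"
proof (rule psubset_card_mono)
  show "finite {l\<in>{1..k'}. l \<in> cnbrs N E i}" by auto
  have "k' \<in> {1..N}" using cn_sub[OF i, of E] k' by auto
  hence a: "k' \<in> {l\<in>{1..k'}. l \<in> cnbrs N E i}" using k' by auto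
  have b: "k' \<notin> {l\<in>{1..k}. l \<in> cnbrs N E i}" using lt by auto
  have c: "{l\<in>{1..k}. l \<in> cnbrs N E i} \<subseteq> {l\<in>{1..k'}. l \<in> cnbrs N E i}" using lt by auto
  show "{l\<in>{1..k}. l \<in> cnbrs N E i} \<subset> {l\<in>{1..k'}. l \<in> cnbrs N E i}"
    using a b c by blast
qed

lemma sidx_eq:
  assumes sg: "simple_graph N E" and i: "i \<in> {1..N}" and k: "k \<in> cnbrs N E i"
  shows "sidx N E i k = card {l\<in>{1..k}. l \<in> cnbrs N E i} + off N E i"
proof -
  have "k \<le> N" using cn_sub[OF i, of E] k by auto
  thus ?thesis using cnt_eq[OF sg i \<open>k \<le> N\<close>] unfolding sidx_def off_def by simp
qed

lemma sidx_range:
  assumes sg: "simple_graph N E" and i: "i \<in> {1..N}" and k: "k \<in> cnbrs N E i"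
  shows "off N E i < sidx N E i k \<and> sidx N E i k \<le> off N E i + mdeg N E i"
  using sidx_eq[OF assms] cnt_bounds[OF assms] by auto

lemma sidx_lt:
  assumes sg: "simple_graph N E" and i: "i \<in> {1..N}" and k: "k \<in> cnbrs N E i"
  shows "1 \<le> sidx N E i k \<and> sidx N E i k \<le> mtot N E"
proof -
  have "off N E i + mdeg N E i \<le> mtot N E"
    using off_step[of i N E] sum_mono_upto[of i N N E] i unfolding mtot_def by auto
  thus ?thesis using sidx_range[OF assms] by auto
qed

lemma sidx_inj:
  assumes sg: "simple_graph N E" and i: "i \<in> {1..N}" and k: "k \<in> cnbrs N E i"
    and i': "i' \<in> {1..N}" and k': "k' \<in> cnbrs N E i'"
    and eq: "sidx N E i k = sidx N E i' k'"
  shows "i = i' \<and> k = k'"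
proof -
  have blk: "sidx N E a b < sidx N E a' b'" if "a \<in> {1..N}" "b \<in> cnbrs N E a"
     "a' \<in> {1..N}" "b' \<in> cnbrs N E a'" "a < a'" for a b a' b'
  proof -
    have "off N E a + mdeg N E a \<le> off N E a'"
      using off_step[of a N E] sum_mono_upto[of a "a'-1" N E] that unfolding off_def by auto
    thus ?thesis using sidx_range[OF sg that(1,2)] sidx_range[OF sg that(3,4)] by auto
  qed
  have "i = i'"
    using blk[OF i k i' k'] blk[OF i' k' i k] eq by (cases i i' rule: linorder_cases) auto
  moreover have "k = k'"
  proof (rule ccontr)
    assume "k \<noteq> k'"
    hence "k < k' \<or> k' < k" by auto
    have k'': "k' \<in> cnbrs N E i" using k' \<open>i = i'\<close> by simp
    have e2: "card {l\<in>{1..k}. l \<in> cnbrs N E i} = card {l\<in>{1..k'}. l \<in> cnbrs N E i}"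
      using eq \<open>i = i'\<close> sidx_eq[OF sg i k] sidx_eq[OF sg i k''] by simp
    show False
    proof (cases "k < k'")
      case True thus False using cnt_mono[OF sg i k k''] e2 by simp
    next
      case False hence "k' < k" using \<open>k \<noteq> k'\<close> by simp
      thus False using cnt_mono[OF sg i k'' k] e2 by simp
    qed
  qed
  ultimately show ?thesis by simp
qed


lemma dim_Evec[simp]: "dim_vec (Evec N E i k) = mtot N E"
  unfolding Evec_def by auto

lemma Evec_idx:
  assumes "r < mtot N E"
  shows "Evec N E i k $ r = (if k \<in> cnbrs N E i \<and> sidx N E i k - 1 = r then 1 else 0)"
  using assms unfolding Evec_def by (auto simp: unit_vec_def)

lemma H_carrier: "Hmat N E \<in> carrier_mat (mtot N E) N"
  unfolding Hmat_def by auto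

lemma dim_H[simp]: "dim_row (Hmat N E) = mtot N E" "dim_col (Hmat N E) = N"
  unfolding Hmat_def by auto

lemma H_idx:
  assumes "r < mtot N E" "c < N"
  shows "Hmat N E $$ (r, c) =
     (\<Sum>i=1..N. if c + 1 \<in> cnbrs N E i \<and> sidx N E i (c+1) - 1 = r then 1 else 0)"
  using assms unfolding Hmat_def by (simp add: Evec_idx)

lemma K1:
  assumes sg: "simple_graph N E" and i: "i \<in> {1..N}" and k: "k \<in> cnbrs N E i" and c: "c < N"
  shows "Hmat N E $$ (sidx N E i k - 1, c) = (if c + 1 = k then 1 else 0)"
proof -
  have lt: "sidx N E i k - 1 < mtot N E" and ge: "1 \<le> sidx N E i k"
    using sidx_lt[OF sg i k] by auto
  have "Hmat N E $$ (sidx N E i k - 1, c) =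
     (\<Sum>i'\<in>{1..N}. if i' = i then (if c + 1 = k then 1 else 0) else 0)"
    unfolding H_idx[OF lt c]
  proof (rule sum.cong)
    fix i' assume i': "i' \<in> {1..N}"
    show "(if c + 1 \<in> cnbrs N E i' \<and> sidx N E i' (c+1) - 1 = sidx N E i k - 1 then 1 else 0) =
      (if i' = i then (if c + 1 = k then 1 else 0) else (0::real))"
    proof (cases "c + 1 \<in> cnbrs N E i' \<and> sidx N E i' (c+1) - 1 = sidx N E i k - 1")
      case True
      hence "sidx N E i' (c+1) = sidx N E i k"
        using sidx_lt[OF sg i' conjunct1[OF True]] ge by linarith
      hence "i' = i \<and> c + 1 = k" using sidx_inj[OF sg i' conjunct1[OF True] i k] by simp
      thus ?thesis using True by simp
    next
      case False
      thus ?thesis using k by auto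
    qed
  qed simp
  also have "\<dots> = (if c + 1 = k then 1 else 0)" using i by simp
  finally show ?thesis .
qed

lemma cn_sym:
  assumes sg: "simple_graph N E" and a: "a \<in> {1..N}"
  shows "{i\<in>{1..N}. a \<in> cnbrs N E i} = cnbrs N E a"
  using sg a unfolding cnbrs_def nbrs_def simple_graph_def by auto

lemma K2:
  assumes sg: "simple_graph N E" and a: "a < N" and b: "b < N"
  shows "(\<Sum>r\<in>{0..<mtot N E}. Hmat N E $$ (r, a) * Hmat N E $$ (r, b)) =
     (if a = b then real (mdeg N E (a+1)) else 0)"
proof -
  let ?m = "mtot N E"
  let ?f = "\<lambda>i r. if a + 1 \<in> cnbrs N E i \<and> sidx N E i (a+1) - 1 = r then 1 else (0::real)"
  have "(\<Sum>r\<in>{0..<?m}. Hmat N E $$ (r, a) * Hmat N E $$ (r, b)) =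
        (\<Sum>r\<in>{0..<?m}. \<Sum>i=1..N. ?f i r * Hmat N E $$ (r, b))"
    by (rule sum.cong) (use a in \<open>auto simp: H_idx sum_distrib_right\<close>)
  also have "\<dots> = (\<Sum>i=1..N. \<Sum>r\<in>{0..<?m}. ?f i r * Hmat N E $$ (r, b))"
    by (rule sum.swap)
  also have "\<dots> = (\<Sum>i=1..N. if a + 1 \<in> cnbrs N E i then (if a = b then 1 else 0) else 0)"
  proof (rule sum.cong)
    fix i assume i: "i \<in> {1..N}"
    show "(\<Sum>r\<in>{0..<?m}. ?f i r * Hmat N E $$ (r, b)) =
      (if a + 1 \<in> cnbrs N E i then (if a = b then 1 else 0) else 0)"
    proof (cases "a + 1 \<in> cnbrs N E i")
      case True
      have lt: "sidx N E i (a+1) - 1 < ?m" using sidx_lt[OF sg i True] by auto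
      have "(\<Sum>r\<in>{0..<?m}. ?f i r * Hmat N E $$ (r, b)) =
         (\<Sum>r\<in>{0..<?m}. if r = sidx N E i (a+1) - 1 then Hmat N E $$ (r, b) else 0)"
        by (rule sum.cong) (use True in auto)
      also have "\<dots> = Hmat N E $$ (sidx N E i (a+1) - 1, b)" using lt by simp
      also have "\<dots> = (if a = b then 1 else 0)" using K1[OF sg i True b] by simp
      finally show ?thesis using True by simp
    qed simp
  qed simp
  also have "\<dots> = (if a = b then real (card {i\<in>{1..N}. a + 1 \<in> cnbrs N E i}) else 0)"
    by (simp add: sum.If_cases Int_def)
  also have "\<dots> = (if a = b then real (mdeg N E (a+1)) else 0)"
    using cn_sym[OF sg, of "a+1"] a card_cn[OF sg] by (cases "a = b") simp_all
  finally show ?thesis .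
qed


lemma Hbar_eq: "Hbar N E = mat N (mtot N E) (\<lambda>(a, r). 1 / real (mdeg N E (a + 1)) * Hmat N E $$ (r, a))"
  unfolding Hbar_def
  by (subst mat_diag_mult_left[of _ N "mtot N E"]) (auto simp: H_carrier intro!: eq_matI)

lemma Hbar_carrier: "Hbar N E \<in> carrier_mat N (mtot N E)"
  unfolding Hbar_eq by auto

lemma HbarH:
  assumes sg: "simple_graph N E"
  shows "Hbar N E * Hmat N E = 1\<^sub>m N"
proof (rule eq_matI)
  fix a b assume a: "a < dim_row (1\<^sub>m N :: real mat)" and b: "b < dim_col (1\<^sub>m N :: real mat)"
  hence a: "a < N" and b: "b < N" by auto
  have "(Hbar N E * Hmat N E) $$ (a, b) =
     (\<Sum>r\<in>{0..<mtot N E}. 1 / real (mdeg N E (a + 1)) * (Hmat N E $$ (r, a) * Hmat N E $$ (r, b)))"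
    using a b H_carrier[of N E] by (auto simp: Hbar_eq scalar_prod_def intro!: sum.cong)
  also have "\<dots> = 1 / real (mdeg N E (a + 1)) * (if a = b then real (mdeg N E (a+1)) else 0)"
    by (simp only: sum_distrib_left[symmetric] K2[OF sg a b])
  also have "\<dots> = 1\<^sub>m N $$ (a, b)" using a b unfolding mdeg_def by simp
  finally show "(Hbar N E * Hmat N E) $$ (a, b) = 1\<^sub>m N $$ (a, b)" .
qed (use H_carrier[of N E] Hbar_carrier[of N E] in auto)


lemma Zval:
  assumes sg: "simple_graph N E" and i: "i \<in> {1..N}" and l: "l \<in> cnbrs N E i"
    and y: "y \<in> carrier_vec N"
  shows "(Hmat N E *\<^sub>v y) $ (sidx N E i l - 1) = y $ (l - 1)"
proof -
  have lt: "sidx N E i l - 1 < mtot N E" using sidx_lt[OF sg i l] by auto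
  have lN: "l \<in> {1..N}" using cn_sub[OF i, of E] l by auto
  have "(Hmat N E *\<^sub>v y) $ (sidx N E i l - 1) =
      (\<Sum>c\<in>{0..<N}. Hmat N E $$ (sidx N E i l - 1, c) * y $ c)"
    using lt y by (simp add: scalar_prod_def)
  also have "\<dots> = (\<Sum>c\<in>{0..<N}. if c = l - 1 then y $ c else 0)"
    by (rule sum.cong) (use K1[OF sg i l] lN in auto)
  also have "\<dots> = y $ (l - 1)" using lN by auto
  finally show ?thesis .
qed

lemma Evec_dot:
  assumes sg: "simple_graph N E" and i: "i \<in> {1..N}" and l: "l \<in> cnbrs N E i"
  shows "(\<Sum>c\<in>{0..<mtot N E}. Evec N E i l $ c * (z::real vec) $ c) = z $ (sidx N E i l - 1)"
proof -
  have lt: "sidx N E i l - 1 < mtot N E" using sidx_lt[OF sg i l] by auto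
  have "(\<Sum>c\<in>{0..<mtot N E}. Evec N E i l $ c * z $ c) =
     (\<Sum>c\<in>{0..<mtot N E}. if c = sidx N E i l - 1 then z $ c else 0)"
    by (rule sum.cong) (use l in \<open>auto simp: Evec_idx\<close>)
  also have "\<dots> = z $ (sidx N E i l - 1)" using lt by simp
  finally show ?thesis .
qed

lemma W_fix:
  assumes sg: "simple_graph N E" and i: "i \<in> {1..N}" and j: "j \<in> {1..N}"
    and y: "y \<in> carrier_vec N"
  shows "Wmat N E i j *\<^sub>v (Hmat N E *\<^sub>v y) = Hmat N E *\<^sub>v y"
proof (rule eq_vecI)
  let ?m = "mtot N E"
  let ?Z = "Hmat N E *\<^sub>v y"
  let ?d = "\<lambda>l. Evec N E i l - Evec N E j l"
  have Zc: "?Z \<in> carrier_vec ?m" using H_carrier[of N E] y by auto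
  have inner: "(\<Sum>c\<in>{0..<?m}. ?d l $ c * ?Z $ c) = 0" if l: "l \<in> ind N E i j" for l
  proof -
    have li: "l \<in> cnbrs N E i" and lj: "l \<in> cnbrs N E j" using l unfolding ind_def by auto
    have "(\<Sum>c\<in>{0..<?m}. ?d l $ c * ?Z $ c) =
      (\<Sum>c\<in>{0..<?m}. Evec N E i l $ c * ?Z $ c) - (\<Sum>c\<in>{0..<?m}. Evec N E j l $ c * ?Z $ c)"
      by (simp add: sum_subtractf[symmetric] left_diff_distrib)
    also have "\<dots> = 0"
      using Evec_dot[OF sg i li, of ?Z] Evec_dot[OF sg j lj, of ?Z] Zval[OF sg i li y] Zval[OF sg j lj y]
      by simp
    finally show ?thesis .
  qed
  fix r assume "r < dim_vec ?Z"
  hence r: "r < ?m" by simp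
  have "(Wmat N E i j *\<^sub>v ?Z) $ r = (\<Sum>c\<in>{0..<?m}. Wmat N E i j $$ (r, c) * ?Z $ c)"
    using r unfolding Wmat_def by (simp add: scalar_prod_def)
  also have "\<dots> = (\<Sum>c\<in>{0..<?m}. (if c = r then ?Z $ c else 0) -
       1/2 * (\<Sum>l\<in>ind N E i j. ?d l $ r * (?d l $ c * ?Z $ c)))"
  proof (rule sum.cong)
    fix c assume "c \<in> {0..<?m}"
    hence c: "c < ?m" by simp
    have "Wmat N E i j $$ (r, c) = (if c = r then 1 else 0) - 1/2 * (\<Sum>l\<in>ind N E i j. ?d l $ r * ?d l $ c)"
      using r c by (simp add: Wmat_def outer_def)
    thus "Wmat N E i j $$ (r, c) * ?Z $ c = (if c = r then ?Z $ c else 0) -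
       1/2 * (\<Sum>l\<in>ind N E i j. ?d l $ r * (?d l $ c * ?Z $ c))"
      by (simp add: left_diff_distrib sum_distrib_right mult.assoc)
  qed simp
  also have "\<dots> = ?Z $ r - 1/2 * (\<Sum>l\<in>ind N E i j. ?d l $ r * (\<Sum>c\<in>{0..<?m}. ?d l $ c * ?Z $ c))"
  proof -
    have sw: "(\<Sum>c\<in>{0..<?m}. \<Sum>l\<in>ind N E i j. ?d l $ r * (?d l $ c * ?Z $ c)) =
      (\<Sum>l\<in>ind N E i j. ?d l $ r * (\<Sum>c\<in>{0..<?m}. ?d l $ c * ?Z $ c))"
      by (subst sum.swap) (simp add: sum_distrib_left)
    have dl: "(\<Sum>c\<in>{0..<?m}. if c = r then ?Z $ c else 0) = ?Z $ r" using r by simp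
    show ?thesis
      by (simp only: sum_subtractf sum_distrib_left[symmetric] sw dl)
  qed
  also have "\<dots> = ?Z $ r" using inner by simp
  finally show "(Wmat N E i j *\<^sub>v ?Z) $ r = ?Z $ r" .
qed (simp add: Wmat_def)


lemma W_carrier: "Wmat N E i j \<in> carrier_mat (mtot N E) (mtot N E)"
  unfolding Wmat_def by auto

theorem lemma4:
  fixes N :: nat and EI Em EC :: "nat \<Rightarrow> nat \<Rightarrow> bool" and i j :: nat and x :: "real vec"
  assumes "N \<ge> 2"
    and "simple_graph N EI" and "connected_graph N EI" and "\<not> complete_graph N EI"
    and "maximal_triangle_free_spanning_subgraph N Em EI"
    and "simple_graph N EC" and "subgraph Em EC" and "subgraph EC EI"
    and "i \<in> {1..N}" and "j \<in> nbrs N EC i"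
    and "x \<in> carrier_vec (mtot N EI)"
  shows "let W = Wmat N EI i j;
             Q = W - Hmat N EI * Hbar N EI * W;
             Z = Hmat N EI * Hbar N EI *\<^sub>v x
         in Q *\<^sub>v Z = 0\<^sub>v (mtot N EI)"
proof -
  have sg: "simple_graph N EI" by fact
  have i: "i \<in> {1..N}" by fact
  have j: "j \<in> {1..N}" using assms(10) unfolding nbrs_def by auto
  let ?m = "mtot N EI"
  let ?H = "Hmat N EI" and ?B = "Hbar N EI" and ?W = "Wmat N EI i j"
  have Hc: "?H \<in> carrier_mat ?m N" by (rule H_carrier)
  have Bc: "?B \<in> carrier_mat N ?m" by (rule Hbar_carrier)
  have Wc: "?W \<in> carrier_mat ?m ?m" by (rule W_carrier)
  have xc: "x \<in> carrier_vec ?m" by fact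
  define y where "y = ?B *\<^sub>v x"
  have yc: "y \<in> carrier_vec N" unfolding y_def using Bc xc by auto
  have Zeq: "?H * ?B *\<^sub>v x = ?H *\<^sub>v y" unfolding y_def using Hc Bc xc by simp
  have Zc: "?H *\<^sub>v y \<in> carrier_vec ?m" using Hc yc by auto
  have WZ: "?W *\<^sub>v (?H *\<^sub>v y) = ?H *\<^sub>v y" by (rule W_fix[OF sg i j yc])
  have PZ: "?H * ?B *\<^sub>v (?H *\<^sub>v y) = ?H *\<^sub>v y"
  proof -
    have "?H * ?B *\<^sub>v (?H *\<^sub>v y) = ?H *\<^sub>v (?B *\<^sub>v (?H *\<^sub>v y))"
      using Hc Bc Zc by simp
    also have "?B *\<^sub>v (?H *\<^sub>v y) = (?B * ?H) *\<^sub>v y" using Hc Bc yc by simp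
    also have "\<dots> = y" using HbarH[OF sg] yc by simp
    finally show ?thesis .
  qed
  have PWc: "?H * ?B * ?W \<in> carrier_mat ?m ?m" using Hc Bc Wc by auto
  have "(?W - ?H * ?B * ?W) *\<^sub>v (?H *\<^sub>v y) = ?W *\<^sub>v (?H *\<^sub>v y) - (?H * ?B * ?W) *\<^sub>v (?H *\<^sub>v y)"
    by (rule minus_mult_distrib_mat_vec[OF Wc PWc Zc])
  also have "(?H * ?B * ?W) *\<^sub>v (?H *\<^sub>v y) = (?H * ?B) *\<^sub>v (?W *\<^sub>v (?H *\<^sub>v y))"
    using Hc Bc Wc Zc by (metis assoc_mult_mat_vec mult_carrier_mat)
  also have "\<dots> = ?H *\<^sub>v y" using WZ PZ by simp
  also have "?W *\<^sub>v (?H *\<^sub>v y) - ?H *\<^sub>v y = 0\<^sub>v ?m" using WZ Zc by simp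
  finally show ?thesis using Zeq by (simp add: Let_def)
qed

end
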